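(* Let $R$ be a finite group and $S\subseteq R$. If $\mathrm{Cay}(R,S)$ is a nontrivial generalised wreath product with respect to subgroups $K$ and $H$, and $\mathbf{Z}(H)\cap K\not\leq \mathbf{Z}(R)$, then $\mathrm{Aut}(R)_S>1$.
   Context: $\mathbf{Z}(X)$ denotes the centre of a group $X$. $\mathrm{Aut}(R)_S$ is the group of automorphisms of $R$ fixing $S$ setwise. $\mathrm{Cay}(R,S)$ (vertex set $R$, arcs $r\to sr$ for $s\in S$) is a nontrivial generalised wreath product with respect to $K$ and $H$ if $1<K\trianglelefteq H<R$ and $K(S\setminus H)=S\setminus H=(S\setminus H)K$. *)

theory Defs
  imports "HOL-Algebra.Algebra"
begin

definition centre_of :: "('a, 'b) monoid_scheme \<Rightarrow> 'a set \<Rightarrow> 'a set" where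
  "centre_of G H = {z \<in> H. \<forall>h \<in> H. z \<otimes>\<^bsub>G\<^esub> h = h \<otimes>\<^bsub>G\<^esub> z}"

definition nontrivial_gen_wreath ::
  "('a, 'b) monoid_scheme \<Rightarrow> 'a set \<Rightarrow> 'a set \<Rightarrow> 'a set \<Rightarrow> bool" where
  "nontrivial_gen_wreath R S K H \<longleftrightarrow>
     subgroup K R \<and> subgroup H R \<and> K \<noteq> {\<one>\<^bsub>R\<^esub>} \<and> K \<subseteq> H \<and>
     normal K (R\<lparr>carrier := H\<rparr>) \<and> H \<noteq> carrier R \<and>
     K <#>\<^bsub>R\<^esub> (S - H) = S - H \<and> (S - H) <#>\<^bsub>R\<^esub> K = S - H"

end

theory Submission
  imports Defs "HOL-Algebra.Group_Action"
begin

lemma (in group) aux4p7: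
  fixes S K H :: "'a set"
  assumes "finite (carrier G)" and "S \<subseteq> carrier G"
    and "nontrivial_gen_wreath G S K H"
    and "\<not> (centre_of G H \<inter> K \<subseteq> centre_of G (carrier G))"
  shows "\<exists>\<phi> \<in> auto G. \<phi> ` S = S \<and> \<phi> \<noteq> (\<lambda>x \<in> carrier G. x)"
proof -
  have sK: "subgroup K G" and sH: "subgroup H G" and KH: "K \<subseteq> H"
    and L: "K <#> (S - H) = S - H" and Rt: "(S - H) <#> K = S - H"
    using assms(3) unfolding nontrivial_gen_wreath_def by auto
  obtain z where zc: "z \<in> centre_of G H" and zK: "z \<in> K" and znc: "z \<notin> centre_of G (carrier G)"
    using assms(4) by blast
  have zR: "z \<in> carrier G" using zK sK subgroup.subset by blast
  have zH: "\<And>h. h \<in> H \<Longrightarrow> z \<otimes> h = h \<otimes> z" using zc unfolding centre_of_def by auto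
  have izK: "inv z \<in> K" using zK sK by (simp add: subgroup.m_inv_closed)
  obtain x where xR: "x \<in> carrier G" and xz: "z \<otimes> x \<noteq> x \<otimes> z"
    using znc zR unfolding centre_of_def by auto
  define \<phi> where "\<phi> = (\<lambda>h \<in> carrier G. z \<otimes> h \<otimes> inv z)"
  have auto: "\<phi> \<in> auto G"
  proof -
    have "\<phi> \<in> Bij (carrier G)"
      unfolding \<phi>_def Bij_def using conjugation_is_bij[OF zR] by simp
    moreover have "\<phi> \<in> hom G G"
      unfolding hom_def \<phi>_def using zR by (auto simp: m_assoc simp flip: m_assoc[of "inv z" z])
    ultimately show ?thesis unfolding auto_def by blast
  qed
  have sub: "\<phi> ` S \<subseteq> S"
  proof
    fix y assume "y \<in> \<phi> ` S"
    then obtain s where s: "s \<in> S" and y: "y = z \<otimes> s \<otimes> inv z"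
      using assms(2) unfolding \<phi>_def by auto
    have sR: "s \<in> carrier G" using s assms(2) by auto
    show "y \<in> S"
    proof (cases "s \<in> H")
      case True
      then have "y = s" using y zH zR sR by (simp add: m_assoc)
      then show ?thesis using s by simp
    next
      case False
      have "z \<otimes> s \<in> K <#> (S - H)" using zK s False unfolding set_mult_def by blast
      then have "z \<otimes> s \<in> S - H" using L by simp
      then have "z \<otimes> s \<otimes> inv z \<in> (S - H) <#> K" using izK unfolding set_mult_def by blast
      then show ?thesis using Rt y by simp
    qed
  qed
  have inj: "inj_on \<phi> S"
    using auto assms(2) unfolding auto_def Bij_def bij_betw_def inj_on_def by blast
  have "\<phi> ` S = S"
    using endo_inj_surj[OF finite_subset[OF assms(2) assms(1)] sub inj] .
  moreover have "\<phi> \<noteq> (\<lambda>x \<in> carrier G. x)"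
  proof
    assume "\<phi> = (\<lambda>x \<in> carrier G. x)"
    then have "z \<otimes> x \<otimes> inv z = x" using xR unfolding \<phi>_def by (metis restrict_apply')
    then have "z \<otimes> x \<otimes> inv z \<otimes> z = x \<otimes> z" by simp
    then have "z \<otimes> x = x \<otimes> z" using zR xR by (simp add: m_assoc)
    then show False using xz by simp
  qed
  ultimately show ?thesis using auto by blast
qed

theorem lemma4p7:
  fixes R :: "('a, 'b) monoid_scheme" and S K H :: "'a set"
  assumes "group R" and "finite (carrier R)" and "S \<subseteq> carrier R"
    and "nontrivial_gen_wreath R S K H"
    and "\<not> (centre_of R H \<inter> K \<subseteq> centre_of R (carrier R))"
  shows "\<exists>\<phi> \<in> auto R. \<phi> ` S = S \<and> \<phi> \<noteq> (\<lambda>x \<in> carrier R. x)"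
  using group.aux4p7[OF assms(1)] assms(2-5) by blast

end
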